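(* Let $p$ be a smooth function on $T^\ast(\mathbb{R}^n)\smallsetminus0$ with $\operatorname{Re}p=\xi_1$, and let $\gamma=[a,b]\times\{w_0\}$ be a bicharacteristic of $\operatorname{Re}p=\xi_1$. If $\operatorname{Im}p$ strongly changes sign from $-$ to $+$ on $\gamma$, then $L_p(\gamma)$ is defined and $0\le L_p(\gamma)\le|\gamma|$. Moreover, for every $\delta,\varepsilon>0$ there exists a bicharacteristic $\tilde\gamma=[\tilde a,\tilde b]\times\{\tilde w\}$ of $\operatorname{Re}p$ with $a-\varepsilon<\tilde a\le\tilde b<b+\varepsilon$ and $|\tilde w-w_0|<\varepsilon$ such that $\operatorname{Im}p$ strongly changes sign from $-$ to $+$ on $\tilde\gamma$ and $|\tilde\gamma|<L_p(\gamma)+\delta$.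
   Context: Write points of $T^\ast(\mathbb{R}^n)$ as $(x_1,x',\xi_1,\xi')$. A bicharacteristic of $\xi_1$ is $\gamma=[a,b]\times\{w_0\}=\{(t,x',0,\xi'):a\le t\le b\}$, $w_0=(x',0,\xi')$; write $g(t,w)$; $|\gamma|=b-a$. For $\gamma_j=[a_j,b_j]\times\{w_j\}$, $\gamma_j\dashrightarrow\gamma$ means $\liminf a_j\ge a$, $\limsup b_j\le b$, $w_j\to w_0$. $\operatorname{Im}p$ strongly changes sign from $-$ to $+$ on $[a,b]\times\{w_0\}$ if $\operatorname{Im}p(t,w_0)=0$ for $a\le t\le b$ and for every $\varepsilon>0$ there exist $a-\varepsilon<s_-<a$, $b<s_+<b+\varepsilon$ with $\operatorname{Im}p(s_-,w_0)<0<\operatorname{Im}p(s_+,w_0)$. If some sequence of bicharacteristics $\gamma_j$ of $\xi_1$ with this sign change satisfies $\gamma_j\dashrightarrow\gamma$, then $L_p(\gamma)=\inf\liminf_j|\gamma_j|$ over all such sequences (otherwise undefined). *)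

theory Defs
  imports "HOL-Analysis.Analysis" "HOL-Library.Extended_Real"
begin

text \<open>Points of T*(R^n) are written ((x1, x'), (xi1, xi')) with x', xi' in R^(n-1),
  where R^(n-1) is the type real^'m.  The reduced point w = (x', xi') of the paper
  (with xi1 = 0) is an element of (real^'m) \<times> (real^'m).\<close>

type_synonym 'm cotan = "(real \<times> (real^'m)) \<times> (real \<times> (real^'m))"

definition cotan_minus_zero :: "'m::finite cotan set" where
  "cotan_minus_zero = {(x, \<xi>). \<xi> \<noteq> 0}"

text \<open>F vs is the iterated directional derivative along the
  directions in the list vs, F (v # vs) being the derivative of F vs in direction v.\<close>
definition smooth_on :: "'a::real_normed_vector set \<Rightarrow> ('a \<Rightarrow> 'b::real_normed_vector) \<Rightarrow> bool" where
  "smooth_on S f \<longleftrightarrow> open S \<and>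
     (\<exists>F :: 'a list \<Rightarrow> 'a \<Rightarrow> 'b.
        (\<forall>x\<in>S. F [] x = f x) \<and>
        (\<forall>vs. continuous_on S (F vs)) \<and>
        (\<forall>v vs. \<forall>x\<in>S. ((\<lambda>t. F vs (x + t *\<^sub>R v)) has_vector_derivative F (v # vs) x) (at 0)))"

definition gpt :: "real \<Rightarrow> (real^'m) \<times> (real^'m) \<Rightarrow> 'm::finite cotan" where
  "gpt t w = ((t, fst w), (0, snd w))"

text \<open>A bicharacteristic [a,b] \<times> {w} of xi1 in T*(R^n) minus 0 is encoded as the triple (a, b, w).\<close>
type_synonym 'm bichar = "real \<times> real \<times> ((real^'m) \<times> (real^'m))"

definition is_bichar :: "'m::finite bichar \<Rightarrow> bool" where
  "is_bichar \<gamma> = (case \<gamma> of (a, b, w) \<Rightarrow> a \<le> b \<and> snd w \<noteq> 0)"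

definition blen :: "'m::finite bichar \<Rightarrow> real" where
  "blen \<gamma> = (case \<gamma> of (a, b, w) \<Rightarrow> b - a)"

definition strongly_changes_sign :: "('m::finite cotan \<Rightarrow> real) \<Rightarrow> 'm bichar \<Rightarrow> bool" where
  "strongly_changes_sign q \<gamma> = (case \<gamma> of (a, b, w) \<Rightarrow>
     (\<forall>t\<in>{a..b}. q (gpt t w) = 0) \<and>
     (\<forall>\<epsilon>>0. \<exists>sm sp. a - \<epsilon> < sm \<and> sm < a \<and> b < sp \<and> sp < b + \<epsilon> \<and>
                      q (gpt sm w) < 0 \<and> 0 < q (gpt sp w)))"

definition bconv :: "(nat \<Rightarrow> 'm::finite bichar) \<Rightarrow> 'm bichar \<Rightarrow> bool" where
  "bconv \<Gamma> \<gamma> = (case \<gamma> of (a, b, w) \<Rightarrow>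
     ereal a \<le> liminf (\<lambda>j. ereal (fst (\<Gamma> j))) \<and>
     limsup (\<lambda>j. ereal (fst (snd (\<Gamma> j)))) \<le> ereal b \<and>
     (\<lambda>j. snd (snd (\<Gamma> j))) \<longlonglongrightarrow> w)"

definition Lp_set :: "('m::finite cotan \<Rightarrow> complex) \<Rightarrow> 'm bichar \<Rightarrow> ereal set" where
  "Lp_set p \<gamma> = {liminf (\<lambda>j. ereal (blen (\<Gamma> j))) | \<Gamma>.
      (\<forall>j. is_bichar (\<Gamma> j) \<and> strongly_changes_sign (\<lambda>z. Im (p z)) (\<Gamma> j)) \<and> bconv \<Gamma> \<gamma>}"

definition Lp_defined :: "('m::finite cotan \<Rightarrow> complex) \<Rightarrow> 'm bichar \<Rightarrow> bool" where
  "Lp_defined p \<gamma> \<longleftrightarrow> Lp_set p \<gamma> \<noteq> {}"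

definition Lp :: "('m::finite cotan \<Rightarrow> complex) \<Rightarrow> 'm bichar \<Rightarrow> ereal" where
  "Lp p \<gamma> = Inf (Lp_set p \<gamma>)"

end

theory Submission
  imports Defs
begin

theorem corollary2p12:
  fixes p :: "'m::finite cotan \<Rightarrow> complex"
    and a b :: real and w0 :: "(real^'m) \<times> (real^'m)"
  assumes smooth: "smooth_on cotan_minus_zero p"
    and re_p: "\<forall>z\<in>cotan_minus_zero. Re (p z) = fst (snd z)"
    and bich: "is_bichar (a, b, w0)"
    and sign: "strongly_changes_sign (\<lambda>z. Im (p z)) (a, b, w0)"
  shows "Lp_defined p (a, b, w0) \<and> 0 \<le> Lp p (a, b, w0) \<and> Lp p (a, b, w0) \<le> ereal (b - a) \<and>
    (\<forall>\<delta>>0. \<forall>\<epsilon>>0. \<exists>ta tb wt. is_bichar (ta, tb, wt) \<and>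
        a - \<epsilon> < ta \<and> ta \<le> tb \<and> tb < b + \<epsilon> \<and> norm (wt - w0) < \<epsilon> \<and>
        strongly_changes_sign (\<lambda>z. Im (p z)) (ta, tb, wt) \<and>
        ereal (blen (ta, tb, wt)) < Lp p (a, b, w0) + ereal \<delta>)"
proof -
  define \<Gamma>0 where "\<Gamma>0 = (\<lambda>j::nat. (a, b, w0))"
  have lc: "liminf (\<lambda>j. ereal (c::real)) = ereal c" for c
    by (rule lim_imp_Liminf) auto
  have lc2: "limsup (\<lambda>j. ereal (c::real)) = ereal c" for c
    by (rule lim_imp_Limsup) auto
  have b0: "bconv \<Gamma>0 (a, b, w0)"
    unfolding bconv_def \<Gamma>0_def by (simp add: lc lc2)
  have mem: "ereal (b - a) \<in> Lp_set p (a, b, w0)"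
    unfolding Lp_set_def
    apply (rule CollectI, rule exI[of _ \<Gamma>0])
    using b0 bich sign by (simp add: \<Gamma>0_def blen_def lc)
  have D: "Lp_defined p (a, b, w0)" using mem unfolding Lp_defined_def by auto
  have U: "Lp p (a, b, w0) \<le> ereal (b - a)" unfolding Lp_def using mem by (rule Inf_lower)
  have L0: "0 \<le> Lp p (a, b, w0)" unfolding Lp_def
  proof (rule Inf_greatest)
    fix x assume "x \<in> Lp_set p (a, b, w0)"
    then obtain \<Gamma> where x: "x = liminf (\<lambda>j. ereal (blen (\<Gamma> j)))"
      and adm0: "\<forall>j. is_bichar (\<Gamma> j) \<and> strongly_changes_sign (\<lambda>z. Im (p z)) (\<Gamma> j)"
      and "bconv \<Gamma> (a, b, w0)" unfolding Lp_set_def by auto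
    have adm: "\<forall>j. is_bichar (\<Gamma> j)" using adm0 by blast
    have "\<forall>j. 0 \<le> ereal (blen (\<Gamma> j))"
      using adm by (auto simp: is_bichar_def blen_def split: prod.splits)
    then show "0 \<le> x" unfolding x by (intro Liminf_bounded) auto
  qed
  obtain r where r: "Lp p (a, b, w0) = ereal r" using L0 U
    by (cases "Lp p (a, b, w0)") auto
  have P2: "\<exists>ta tb wt. is_bichar (ta, tb, wt) \<and>
        a - \<epsilon> < ta \<and> ta \<le> tb \<and> tb < b + \<epsilon> \<and> norm (wt - w0) < \<epsilon> \<and>
        strongly_changes_sign (\<lambda>z. Im (p z)) (ta, tb, wt) \<and>
        ereal (blen (ta, tb, wt)) < Lp p (a, b, w0) + ereal \<delta>"
    if d: "\<delta> > 0" and e: "\<epsilon> > 0" for \<delta> \<epsilon>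
  proof -
    have "Inf (Lp_set p (a, b, w0)) < Lp p (a, b, w0) + ereal \<delta>"
      using r d unfolding Lp_def[symmetric] by simp
    then obtain x where "x \<in> Lp_set p (a, b, w0)" and xl: "x < Lp p (a, b, w0) + ereal \<delta>"
      by (auto simp: Inf_less_iff)
    then obtain \<Gamma> where x: "x = liminf (\<lambda>j. ereal (blen (\<Gamma> j)))"
      and adm: "\<forall>j. is_bichar (\<Gamma> j) \<and> strongly_changes_sign (\<lambda>z. Im (p z)) (\<Gamma> j)"
      and bc: "bconv \<Gamma> (a, b, w0)" unfolding Lp_set_def by auto
    have e1: "eventually (\<lambda>j. ereal (a - \<epsilon>) < ereal (fst (\<Gamma> j))) sequentially"
      using bc e unfolding bconv_def
      by (intro less_LiminfD) (auto intro: less_le_trans[of "ereal (a - \<epsilon>)" "ereal a"])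
    have e2: "eventually (\<lambda>j. ereal (fst (snd (\<Gamma> j))) < ereal (b + \<epsilon>)) sequentially"
      using bc e unfolding bconv_def
      by (intro Limsup_lessD) (auto intro: le_less_trans[of _ "ereal b" "ereal (b + \<epsilon>)"])
    have e3: "eventually (\<lambda>j. dist (snd (snd (\<Gamma> j))) w0 < \<epsilon>) sequentially"
      using bc e unfolding bconv_def by (auto simp: tendsto_iff)
    have fr: "frequently (\<lambda>j. ereal (blen (\<Gamma> j)) < Lp p (a, b, w0) + ereal \<delta>) sequentially"
    proof (rule ccontr)
      assume "\<not> ?thesis"
      then have "eventually (\<lambda>j. Lp p (a, b, w0) + ereal \<delta> \<le> ereal (blen (\<Gamma> j))) sequentially"
        by (simp add: not_frequently not_less)
      then have "Lp p (a, b, w0) + ereal \<delta> \<le> x" unfolding x by (rule Liminf_bounded)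
      with xl show False by simp
    qed
    have "frequently (\<lambda>j. (ereal (blen (\<Gamma> j)) < Lp p (a, b, w0) + ereal \<delta>) \<and>
        ereal (a - \<epsilon>) < ereal (fst (\<Gamma> j)) \<and> ereal (fst (snd (\<Gamma> j))) < ereal (b + \<epsilon>) \<and>
        dist (snd (snd (\<Gamma> j))) w0 < \<epsilon>) sequentially"
      using frequently_eventually_conj[OF fr eventually_conj[OF e1 eventually_conj[OF e2 e3]]]
      by (rule frequently_elim1) auto
    then obtain j where j: "ereal (blen (\<Gamma> j)) < Lp p (a, b, w0) + ereal \<delta>"
      "a - \<epsilon> < fst (\<Gamma> j)" "fst (snd (\<Gamma> j)) < b + \<epsilon>" "dist (snd (snd (\<Gamma> j))) w0 < \<epsilon>"
      by (auto dest: frequently_ex)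
    obtain ta tb wt where G: "\<Gamma> j = (ta, tb, wt)" by (cases "\<Gamma> j") auto
    show ?thesis
      apply (rule exI[of _ ta], rule exI[of _ tb], rule exI[of _ wt])
      using j adm[rule_format, of j] G
      by (auto simp: is_bichar_def dist_norm)
  qed
  show ?thesis using D L0 U P2 by blast
qed

end
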